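(* Let $\mathcal{P}$ be a grid polyomino. List the facets of $\Delta_{\mathcal{P}}$ as $F_0,F_1,\dots,F_s$ with $F_{i+1}<_{\mathrm{lex}}F_i$ for all $i$. Then both of the following hold. (1) For every $j\in[s]$, $$\langle F_0,\dots,F_{j-1}\rangle\cap\langle F_j\rangle=\big\langle\{F_j\setminus\{v\}: v \text{ is the lower right corner of a generalized step of } F_j\}\big\rangle.$$ (2) $F_0,F_1,\dots,F_s$ is a shelling order of $\Delta_{\mathcal{P}}$.
   Context: Grid polyomino: take $I=[(1,1),(m,n)]$ and intervals $H_{ij}=[a_{ij},b_{ij}]$ for $i\in[r]$, $j\in[s]$, with $1<(a_{ij})_1<(b_{ij})_1<m$ and $1<(a_{ij})_2<(b_{ij})_2<n$. Assume the first coordinates of $a_{ij}$ and $b_{ij}$ depend only on $i$, the second coordinates depend only on $j$, $(a_{i+1,j})_1=(b_{ij})_1+1$, and $(a_{i,j+1})_2=(b_{ij})_2+1$. Then $\mathcal{P}$ is the set of unit cells $[v,v+(1,1)]$ in $I$ not contained in any $H_{ij}$. $V(\mathcal{P})$ is its set of vertices. An inner interval of $\mathcal{P}$ is a proper interval $[u,w]$ whose unit cells all lie in $\mathcal{P}$; its anti-diagonal corners are $(u_1,w_2)$ and $(w_1,u_2)$. $\Delta_{\mathcal{P}}$ is the simplicial complex on $V(\mathcal{P})$ whose Stanley–Reisner ideal is the initial ideal of the polyomino ideal $I_{\mathcal{P}}$, taken in the reverse lexicographic order with $x_{(i,j)}>x_{(k,l)}$ if $j>l$, or if $j=l$ and $i>k$.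 Equivalently, its faces are the subsets of $V(\mathcal{P})$ containing no two vertices that are the anti-diagonal corners of an inner interval of $\mathcal{P}$. It is a pure complex. $\langle G_1,\dots,G_t\rangle$ denotes the simplicial complex generated by the sets $G_1,\dots,G_t$. A subset $F'=\{(a,b),(c,d),(e,f)\}$ of a face $F$ is a generalized step of $F$, with lower right corner $(c,d)$, if all of the following hold: - $b=d$, $c=e$, $a<c$ and $d<f$; - no vertex $(t,b)$ with $a<t<c$ lies in $F$; - no vertex $(c,t)$ with $d<t<f$ lies in $F$; - $(c,d)$ is the lower right corner of a cell of $\mathcal{P}$; - $[(a,b),(e,f)]$ is an inner interval of $\mathcal{P}$. Total order on $V(\mathcal{P})$: for $a=(i,j)$ and $b=(k,l)$, set $b<_V a$ if $j>l$, or if $j=l$ and $i>k$. Write each facet as $F=\{a_1,\dots,a_d\}$ with $a_{t+1}<_V a_t$. For two facets $F=\{a_1,\dots,a_d\}$ and $G=\{b_1,\dots,b_d\}$, let $k$ be the least index with $a_k\ne b_k$; then $F<_{\mathrm{lex}}G$ if $a_k<_V b_k$. A shelling order of a pure complex is an ordering $F_0,\dots,F_s$ of its facets such that, for each $j\ge1$, $\langle F_0,\dots,F_{j-1}\rangle\cap\langle F_j\rangle$ is generated by a nonempty set of maximal proper faces of $F_j$. *)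

theory Defs
  imports Main
begin

type_synonym pt = "nat \<times> nat"

text \<open>Grid polyomino data: the interval I = [(1,1),(m,n)] and the holes
  H_ij = [a i j, b i j] for i in [r], j in [s].\<close>
definition grid_data :: "nat \<Rightarrow> nat \<Rightarrow> nat \<Rightarrow> nat \<Rightarrow> (nat \<Rightarrow> nat \<Rightarrow> pt) \<Rightarrow> (nat \<Rightarrow> nat \<Rightarrow> pt) \<Rightarrow> bool" where
  "grid_data m n r s a b \<longleftrightarrow>
     1 \<le> r \<and> 1 \<le> s \<and>
     (\<forall>i\<in>{1..r}. \<forall>j\<in>{1..s}.
        1 < fst (a i j) \<and> fst (a i j) < fst (b i j) \<and> fst (b i j) < m \<and>
        1 < snd (a i j) \<and> snd (a i j) < snd (b i j) \<and> snd (b i j) < n) \<and>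
     (\<forall>i\<in>{1..r}. \<forall>j\<in>{1..s}. \<forall>j'\<in>{1..s}.
        fst (a i j) = fst (a i j') \<and> fst (b i j) = fst (b i j')) \<and>
     (\<forall>i\<in>{1..r}. \<forall>i'\<in>{1..r}. \<forall>j\<in>{1..s}.
        snd (a i j) = snd (a i' j) \<and> snd (b i j) = snd (b i' j)) \<and>
     (\<forall>i\<in>{1..<r}. \<forall>j\<in>{1..s}. fst (a (i+1) j) = fst (b i j) + 1) \<and>
     (\<forall>i\<in>{1..r}. \<forall>j\<in>{1..<s}. snd (a i (j+1)) = snd (b i j) + 1)"

text \<open>The unit cell [v, v+(1,1)] is identified with its lower left corner v.
  It is contained in the interval [p,q] iff p \<le> v and v+(1,1) \<le> q componentwise.\<close>
definition cell_in :: "pt \<Rightarrow> pt \<Rightarrow> pt \<Rightarrow> bool" where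
  "cell_in v p q \<longleftrightarrow> fst p \<le> fst v \<and> fst v + 1 \<le> fst q \<and> snd p \<le> snd v \<and> snd v + 1 \<le> snd q"

definition grid_cells :: "nat \<Rightarrow> nat \<Rightarrow> nat \<Rightarrow> nat \<Rightarrow> (nat \<Rightarrow> nat \<Rightarrow> pt) \<Rightarrow> (nat \<Rightarrow> nat \<Rightarrow> pt) \<Rightarrow> pt set" where
  "grid_cells m n r s a b =
     {v. cell_in v (1,1) (m,n) \<and> \<not> (\<exists>i\<in>{1..r}. \<exists>j\<in>{1..s}. cell_in v (a i j) (b i j))}"

definition cell_vertices :: "pt \<Rightarrow> pt set" where
  "cell_vertices v = {v, (fst v + 1, snd v), (fst v, snd v + 1), (fst v + 1, snd v + 1)}"

definition poly_vertices :: "pt set \<Rightarrow> pt set" where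
  "poly_vertices P = (\<Union>v\<in>P. cell_vertices v)"

definition inner_interval :: "pt set \<Rightarrow> pt \<Rightarrow> pt \<Rightarrow> bool" where
  "inner_interval P u w \<longleftrightarrow> fst u < fst w \<and> snd u < snd w \<and>
     (\<forall>v. cell_in v u w \<longrightarrow> v \<in> P)"

definition Delta :: "pt set \<Rightarrow> pt set set" where
  "Delta P = {F. F \<subseteq> poly_vertices P \<and>
     \<not> (\<exists>u w. inner_interval P u w \<and> (fst u, snd w) \<in> F \<and> (fst w, snd u) \<in> F)}"

definition facets :: "'a set set \<Rightarrow> 'a set set" where
  "facets D = {F \<in> D. \<not> (\<exists>G\<in>D. F \<subset> G)}"

definition gen :: "'a set set \<Rightarrow> 'a set set" where
  "gen \<G> = {H. \<exists>G\<in>\<G>. H \<subseteq> G}"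

definition gen_step_corner :: "pt set \<Rightarrow> pt set \<Rightarrow> pt \<Rightarrow> bool" where
  "gen_step_corner P F q \<longleftrightarrow>
     (\<exists>p r. p \<in> F \<and> q \<in> F \<and> r \<in> F \<and>
        snd p = snd q \<and> fst q = fst r \<and> fst p < fst q \<and> snd q < snd r \<and>
        (\<forall>t. fst p < t \<and> t < fst q \<longrightarrow> (t, snd p) \<notin> F) \<and>
        (\<forall>t. snd q < t \<and> t < snd r \<longrightarrow> (fst q, t) \<notin> F) \<and>
        (\<exists>v\<in>P. (fst v + 1, snd v) = q) \<and>
        inner_interval P p r)"

definition vlt :: "pt \<Rightarrow> pt \<Rightarrow> bool" where
  "vlt b a \<longleftrightarrow> snd a > snd b \<or> (snd a = snd b \<and> fst a > fst b)"

definition desc_list :: "pt set \<Rightarrow> pt list" where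
  "desc_list F = (THE xs. set xs = F \<and> sorted_wrt (\<lambda>x y. vlt y x) xs)"

definition lex_less :: "pt set \<Rightarrow> pt set \<Rightarrow> bool" where
  "lex_less F G \<longleftrightarrow>
     (let as = desc_list F; bs = desc_list G in
       \<exists>k. k < length as \<and> k < length bs \<and> take k as = take k bs \<and> vlt (as ! k) (bs ! k))"

definition max_proper_face :: "'a set \<Rightarrow> 'a set \<Rightarrow> bool" where
  "max_proper_face F G \<longleftrightarrow> G \<subset> F \<and> \<not> (\<exists>H. G \<subset> H \<and> H \<subset> F)"

definition shelling_order :: "'a set set \<Rightarrow> (nat \<Rightarrow> 'a set) \<Rightarrow> nat \<Rightarrow> bool" where
  "shelling_order D Fs N \<longleftrightarrow>
     inj_on Fs {0..N} \<and> Fs ` {0..N} = facets D \<and>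
     (\<forall>j\<in>{1..N}. \<exists>\<M>. \<M> \<noteq> {} \<and> (\<forall>G\<in>\<M>. max_proper_face (Fs j) G) \<and>
        gen (Fs ` {0..<j}) \<inter> gen {Fs j} = gen \<M>)"

end

theory Submission
  imports Defs
begin

section \<open>Order on vertices\<close>

lemma vlt_irrefl[simp]: "\<not> vlt x x" by (auto simp: vlt_def)
lemma vlt_trans: "vlt x y \<Longrightarrow> vlt y z \<Longrightarrow> vlt x z" by (auto simp: vlt_def)
lemma vlt_asym: "vlt x y \<Longrightarrow> vlt y x \<Longrightarrow> False" by (auto simp: vlt_def)
lemma vlt_total: "x \<noteq> y \<Longrightarrow> vlt x y \<or> vlt y x"
  by (cases x; cases y) (auto simp: vlt_def)

lemma vlt_max_ex:
  assumes "finite A" "A \<noteq> {}"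
  shows "\<exists>x\<in>A. \<forall>y\<in>A. y \<noteq> x \<longrightarrow> vlt y x"
  using assms
proof (induction A rule: finite_ne_induct)
  case (singleton x) then show ?case by auto
next
  case (insert x A)
  then obtain m where m: "m \<in> A" "\<forall>y\<in>A. y \<noteq> m \<longrightarrow> vlt y m" by auto
  show ?case
  proof (cases "vlt x m")
    case True then show ?thesis using m by auto
  next
    case False
    then have "x = m \<or> vlt m x" using vlt_total by blast
    then show ?thesis using m insert.hyps by (auto intro: vlt_trans)
  qed
qed

lemma desc_ex:
  assumes "finite F"
  shows "\<exists>xs. set xs = F \<and> sorted_wrt (\<lambda>x y. vlt y x) xs"
  using assms
proof (induction F rule: finite_remove_induct)
  case empty then show ?case by auto
next
  case (remove A)
  obtain x where x: "x \<in> A" "\<forall>y\<in>A. y \<noteq> x \<longrightarrow> vlt y x"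
    using vlt_max_ex[OF remove.hyps(1,2)] by auto
  obtain xs where xs: "set xs = A - {x}" "sorted_wrt (\<lambda>x y. vlt y x) xs"
    using remove.IH[OF x(1)] by auto
  have "set (x # xs) = A" using xs x by auto
  moreover have "sorted_wrt (\<lambda>x y. vlt y x) (x # xs)" using xs x by auto
  ultimately show ?case by blast
qed

lemma desc_uniq:
  "sorted_wrt (\<lambda>x y. vlt y x) xs \<Longrightarrow> sorted_wrt (\<lambda>x y. vlt y x) ys \<Longrightarrow> set xs = set ys \<Longrightarrow> xs = ys"
proof (induction xs arbitrary: ys)
  case Nil then show ?case by auto
next
  case (Cons x xs)
  then obtain y ys' where ys: "ys = y # ys'" by (cases ys) auto
  have xy: "x = y"
  proof (rule ccontr)
    assume "x \<noteq> y"
    then have "x \<in> set ys'" "y \<in> set xs" using Cons.prems ys by auto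
    then have "vlt x y" "vlt y x" using Cons.prems ys by auto
    then show False using vlt_asym by blast
  qed
  have "x \<notin> set xs" using Cons.prems(1) by auto
  moreover have "y \<notin> set ys'" using Cons.prems(2) ys by auto
  ultimately have "set xs = set ys'" using Cons.prems(3) ys xy by auto
  then show ?case using Cons ys xy by auto
qed

lemma desc_list_props:
  assumes "finite F"
  shows "set (desc_list F) = F \<and> sorted_wrt (\<lambda>x y. vlt y x) (desc_list F)"
proof -
  have "\<exists>!xs. set xs = F \<and> sorted_wrt (\<lambda>x y. vlt y x) xs"
    using desc_ex[OF assms] desc_uniq by metis
  then show ?thesis unfolding desc_list_def by (rule theI')
qed

lemma sorted_desc_distinct: "sorted_wrt (\<lambda>x y. vlt y x) xs \<Longrightarrow> distinct xs"
  by (induction xs) auto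

definition lexV :: "pt set \<Rightarrow> pt set \<Rightarrow> bool" where
  "lexV F G \<longleftrightarrow> (\<exists>x\<in>G - F. \<forall>y\<in>(F - G) \<union> (G - F). y \<noteq> x \<longrightarrow> vlt y x)"

lemma sorted_desc_nth:
  assumes "sorted_wrt (\<lambda>x y. vlt y x) xs" "y \<in> set xs" "y \<notin> set (take k xs)" "k < length xs"
  shows "y = xs ! k \<or> vlt y (xs ! k)"
proof -
  obtain i where i: "i < length xs" "y = xs ! i" using assms(2) by (auto simp: in_set_conv_nth)
  have "\<not> i < k"
  proof
    assume "i < k"
    then have "y = take k xs ! i" using i by auto
    then have "y \<in> set (take k xs)" using i \<open>i < k\<close> by (metis length_take min_less_iff_conj nth_mem)
    then show False using assms(3) by auto
  qed
  then have "i = k \<or> k < i" by auto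
  then show ?thesis using assms(1) i assms(4) by (auto simp: sorted_wrt_iff_nth_less)
qed

lemma lex_less_lexV:
  assumes "finite F" "finite G" "lex_less F G"
  shows "lexV F G"
proof -
  define as where "as = desc_list F"
  define bs where "bs = desc_list G"
  have A1: "set as = F" and A2: "sorted_wrt (\<lambda>x y. vlt y x) as"
    using desc_list_props[OF assms(1)] unfolding as_def by auto
  have B1: "set bs = G" and B2: "sorted_wrt (\<lambda>x y. vlt y x) bs"
    using desc_list_props[OF assms(2)] unfolding bs_def by auto
  obtain k where k1: "k < length as" and k2: "k < length bs" and k3: "take k as = take k bs"
     and k4: "vlt (as ! k) (bs ! k)"
    using assms(3) unfolding lex_less_def Let_def as_def bs_def by blast
  define x where "x = bs ! k"
  have xG: "x \<in> G" unfolding x_def using B1 k2 nth_mem by blast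
  have distb: "distinct bs" using B2 by (rule sorted_desc_distinct)
  have xnt: "x \<notin> set (take k bs)"
  proof
    assume "x \<in> set (take k bs)"
    then obtain i where i: "i < length (take k bs)" "x = take k bs ! i" by (auto simp: in_set_conv_nth)
    then have "i < k" "bs ! i = bs ! k" using x_def by auto
    then show False using distb k2 by (simp add: nth_eq_iff_index_eq)
  qed
  have tkF1: "set (take k as) \<subseteq> F" using A1 set_take_subset by metis
  have tkF2: "set (take k as) \<subseteq> G" using B1 k3 set_take_subset by metis
  have xF: "x \<notin> F"
  proof
    assume "x \<in> F"
    moreover have "x \<notin> set (take k as)" using xnt k3 by simp
    ultimately have "x = as ! k \<or> vlt x (as ! k)"
      using sorted_desc_nth[OF A2 _ _ k1] A1 by blast
    then show False using k4 x_def vlt_asym by (metis vlt_irrefl)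
  qed
  have "\<forall>y\<in>(F - G) \<union> (G - F). y \<noteq> x \<longrightarrow> vlt y x"
  proof (intro ballI impI)
    fix y assume y: "y \<in> (F - G) \<union> (G - F)" "y \<noteq> x"
    show "vlt y x"
    proof (cases "y \<in> F")
      case True
      then have "y \<notin> G" using y by blast
      then have "y \<notin> set (take k as)" using tkF2 by blast
      then have "y = as ! k \<or> vlt y (as ! k)" using sorted_desc_nth[OF A2 _ _ k1] A1 True by blast
      then show ?thesis using k4 x_def vlt_trans by metis
    next
      case False
      then have "y \<in> G" using y by blast
      moreover have "y \<notin> set (take k bs)" using False tkF1 k3 by auto
      ultimately have "y = bs ! k \<or> vlt y (bs ! k)" using sorted_desc_nth[OF B2 _ _ k2] B1 by blast
      then show ?thesis using y(2) x_def by blast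
    qed
  qed
  then show ?thesis unfolding lexV_def using xG xF by blast
qed

lemma lexV_irrefl: "\<not> lexV F F" by (auto simp: lexV_def)

lemma lexV_asym: "lexV F G \<Longrightarrow> lexV G F \<Longrightarrow> False"
  unfolding lexV_def by (metis DiffD1 DiffD2 UnCI vlt_asym)

lemma lexV_trans:
  assumes "lexV F G" "lexV G H" shows "lexV F H"
proof -
  obtain d1 where d1: "d1 \<in> G - F" "\<forall>y\<in>(F - G) \<union> (G - F). y \<noteq> d1 \<longrightarrow> vlt y d1"
    using assms(1) unfolding lexV_def by blast
  obtain d2 where d2: "d2 \<in> H - G" "\<forall>y\<in>(G - H) \<union> (H - G). y \<noteq> d2 \<longrightarrow> vlt y d2"
    using assms(2) unfolding lexV_def by blast
  have "d1 \<noteq> d2" using d1 d2 by auto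
  then consider "vlt d2 d1" | "vlt d1 d2" using vlt_total by blast
  then show ?thesis
  proof cases
    case 1
    have "d1 \<in> H"
    proof (rule ccontr)
      assume "d1 \<notin> H"
      then have "d1 \<in> (G - H) \<union> (H - G)" using d1(1) by blast
      then have "vlt d1 d2" using d2(2) \<open>d1 \<noteq> d2\<close> by auto
      then show False using 1 vlt_asym by blast
    qed
    have "\<forall>y\<in>(F - H) \<union> (H - F). y \<noteq> d1 \<longrightarrow> vlt y d1"
    proof (intro ballI impI)
      fix y assume y: "y \<in> (F - H) \<union> (H - F)" "y \<noteq> d1"
      have "y \<in> (F - G) \<union> (G - F) \<or> y \<in> (G - H) \<union> (H - G)" using y by auto
      then show "vlt y d1"
      proof
        assume "y \<in> (F - G) \<union> (G - F)" then show ?thesis using d1(2) y(2) by blast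
      next
        assume yy: "y \<in> (G - H) \<union> (H - G)"
        show ?thesis
        proof (cases "y = d2")
          case True then show ?thesis using 1 by simp
        next
          case False then have "vlt y d2" using d2(2) yy by blast
          then show ?thesis using 1 vlt_trans by blast
        qed
      qed
    qed
    then show ?thesis unfolding lexV_def using d1 \<open>d1 \<in> H\<close> by blast
  next
    case 2
    have "d2 \<notin> F"
    proof
      assume "d2 \<in> F"
      then have "d2 \<in> (F - G) \<union> (G - F)" using d2(1) by blast
      then have "vlt d2 d1" using d1(2) \<open>d1 \<noteq> d2\<close> by auto
      then show False using 2 vlt_asym by blast
    qed
    have "\<forall>y\<in>(F - H) \<union> (H - F). y \<noteq> d2 \<longrightarrow> vlt y d2"
    proof (intro ballI impI)
      fix y assume y: "y \<in> (F - H) \<union> (H - F)" "y \<noteq> d2"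
      have "y \<in> (F - G) \<union> (G - F) \<or> y \<in> (G - H) \<union> (H - G)" using y by auto
      then show "vlt y d2"
      proof
        assume yy: "y \<in> (F - G) \<union> (G - F)"
        show ?thesis
        proof (cases "y = d1")
          case True then show ?thesis using 2 by simp
        next
          case False then have "vlt y d1" using d1(2) yy by blast
          then show ?thesis using 2 vlt_trans by blast
        qed
      next
        assume "y \<in> (G - H) \<union> (H - G)" then show ?thesis using d2(2) y(2) by blast
      qed
    qed
    then show ?thesis unfolding lexV_def using d2 \<open>d2 \<notin> F\<close> by blast
  qed
qed


section \<open>Rectangles and conflicts\<close>

definition rect :: "pt set \<Rightarrow> nat \<Rightarrow> nat \<Rightarrow> nat \<Rightarrow> nat \<Rightarrow> bool" where
  "rect P x1 y1 x2 y2 \<longleftrightarrow> (\<forall>x y. x1 \<le> x \<longrightarrow> x < x2 \<longrightarrow> y1 \<le> y \<longrightarrow> y < y2 \<longrightarrow> (x, y) \<in> P)"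

definition conf :: "pt set \<Rightarrow> pt \<Rightarrow> pt \<Rightarrow> bool" where
  "conf P u v \<longleftrightarrow> fst u < fst v \<and> snd v < snd u \<and> rect P (fst u) (snd v) (fst v) (snd u)"

lemma conf_pair[simp]: "conf P (x1, y1) (x2, y2) \<longleftrightarrow> x1 < x2 \<and> y2 < y1 \<and> rect P x1 y2 x2 y1"
  by (simp add: conf_def)

lemma conf_irrefl: "\<not> conf P x x" by (simp add: conf_def)

lemma rect_mono:
  "rect P x1 y1 x2 y2 \<Longrightarrow> x1 \<le> x1' \<Longrightarrow> x2' \<le> x2 \<Longrightarrow> y1 \<le> y1' \<Longrightarrow> y2' \<le> y2 \<Longrightarrow> rect P x1' y1' x2' y2'"
  unfolding rect_def by (meson le_trans less_le_trans)

lemma rect_vjoin: "rect P x1 y1 x2 ym \<Longrightarrow> rect P x1 ym x2 y2 \<Longrightarrow> rect P x1 y1 x2 y2"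
  unfolding rect_def by (meson not_le)

lemma rect_hjoin: "rect P x1 y1 xm y2 \<Longrightarrow> rect P xm y1 x2 y2 \<Longrightarrow> rect P x1 y1 x2 y2"
  unfolding rect_def by (meson not_le)

lemma inner_rect: "inner_interval P u w \<longleftrightarrow> fst u < fst w \<and> snd u < snd w \<and> rect P (fst u) (snd u) (fst w) (snd w)"
  unfolding inner_interval_def rect_def cell_in_def by (auto simp: Suc_le_eq)

lemma Delta_iff: "F \<in> Delta P \<longleftrightarrow> F \<subseteq> poly_vertices P \<and> (\<forall>x\<in>F. \<forall>y\<in>F. \<not> conf P x y)"
proof
  assume A: "F \<in> Delta P"
  have "\<not> conf P x y" if "x \<in> F" "y \<in> F" for x y
  proof
    assume c: "conf P x y"
    have "inner_interval P (fst x, snd y) (fst y, snd x)" using c by (simp add: inner_rect conf_def)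
    then show False using A that unfolding Delta_def by fastforce
  qed
  then show "F \<subseteq> poly_vertices P \<and> (\<forall>x\<in>F. \<forall>y\<in>F. \<not> conf P x y)" using A by (auto simp: Delta_def)
next
  assume A: "F \<subseteq> poly_vertices P \<and> (\<forall>x\<in>F. \<forall>y\<in>F. \<not> conf P x y)"
  have "\<not> (inner_interval P u w \<and> (fst u, snd w) \<in> F \<and> (fst w, snd u) \<in> F)" for u w
  proof
    assume B: "inner_interval P u w \<and> (fst u, snd w) \<in> F \<and> (fst w, snd u) \<in> F"
    then have "conf P (fst u, snd w) (fst w, snd u)" by (simp add: inner_rect)
    then show False using A B by blast
  qed
  then show "F \<in> Delta P" using A unfolding Delta_def by blast
qed

lemma rect_vertex:
  assumes "rect P x1 y1 x2 y2" "x1 < x2" "y1 < y2" "x1 \<le> x" "x \<le> x2" "y1 \<le> y" "y \<le> y2"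
  shows "(x, y) \<in> poly_vertices P"
proof -
  define cx where "cx = (if x < x2 then x else x - 1)"
  define cy where "cy = (if y < y2 then y else y - 1)"
  have "(cx, cy) \<in> P" using assms unfolding rect_def cx_def cy_def by auto
  moreover have "(x, y) \<in> cell_vertices (cx, cy)" using assms unfolding cell_vertices_def cx_def cy_def by auto
  ultimately show ?thesis unfolding poly_vertices_def by blast
qed

lemma facet_max:
  assumes "F \<in> facets (Delta P)" "v \<in> poly_vertices P" "v \<notin> F"
  shows "\<exists>y\<in>F. conf P v y \<or> conf P y v"
proof (rule ccontr)
  assume N: "\<not> ?thesis"
  have F: "F \<in> Delta P" "\<not> (\<exists>G\<in>Delta P. F \<subset> G)" using assms(1) by (auto simp: facets_def)
  have "insert v F \<in> Delta P"
    unfolding Delta_iff using F(1) N assms(2) conf_irrefl by (auto simp: Delta_iff)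
  moreover have "F \<subset> insert v F" using assms(3) by auto
  ultimately show False using F(2) by blast
qed

lemma lemB:
  assumes nc: "\<forall>x\<in>F. \<forall>y\<in>F. \<not> conf P x y"
    and mx: "\<And>v. v \<in> poly_vertices P \<Longrightarrow> v \<notin> F \<Longrightarrow> \<exists>y\<in>F. conf P v y \<or> conf P y v"
    and fin: "finite F"
    and ex: "\<exists>u\<in>F. conf P (a, f) u"
    and H: "\<forall>u\<in>F. \<not> conf P u (a, f)"
  shows "\<exists>q\<in>F. gen_step_corner P F q \<and> conf P (a, f) q"
proof -
  define S where "S = {u\<in>F. conf P (a, f) u}"
  have finS: "finite S" using fin unfolding S_def by auto
  have Sne: "S \<noteq> {}" using ex unfolding S_def by blast
  define b where "b = Min (snd ` S)"
  have bS: "b \<in> snd ` S" unfolding b_def using finS Sne by auto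
  define S' where "S' = {u\<in>S. snd u = b}"
  have finS': "finite S'" using finS unfolding S'_def by auto
  have S'ne: "S' \<noteq> {}" using bS unfolding S'_def by auto
  define c where "c = Max (fst ` S')"
  have "c \<in> fst ` S'" unfolding c_def using finS' S'ne by auto
  then have cS: "(c, b) \<in> S" unfolding S'_def by auto
  have minrow: "\<And>x y. (x, y) \<in> F \<Longrightarrow> conf P (a, f) (x, y) \<Longrightarrow> b \<le> y"
  proof -
    fix x y assume "(x, y) \<in> F" "conf P (a, f) (x, y)"
    then have "(x, y) \<in> S" unfolding S_def by auto
    then show "b \<le> y" unfolding b_def using finS by (metis Min_le finite_imageI image_eqI snd_conv)
  qed
  have maxcol: "\<And>x. (x, b) \<in> F \<Longrightarrow> conf P (a, f) (x, b) \<Longrightarrow> x \<le> c"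
  proof -
    fix x assume "(x, b) \<in> F" "conf P (a, f) (x, b)"
    then have "(x, b) \<in> S'" unfolding S_def S'_def by auto
    then show "x \<le> c" unfolding c_def using finS' by (metis Max_ge finite_imageI image_eqI fst_conv)
  qed
  have qF: "(c, b) \<in> F" and ac: "a < c" and bf: "b < f" and R: "rect P a b c f"
    using cS unfolding S_def by auto
  define T where "T = {x. a \<le> x \<and> x < c \<and> (x, b) \<in> F}"
  have finT: "finite T" unfolding T_def by (rule finite_subset[of _ "{..<c}"]) auto
  have Tne: "T \<noteq> {}"
  proof
    assume T0: "T = {}"
    have abF: "(a, b) \<notin> F" using T0 ac unfolding T_def by auto
    have "(a, b) \<in> poly_vertices P" using rect_vertex[OF R ac bf] ac bf by auto
    then obtain v where vF: "v \<in> F" and vc: "conf P (a, b) v \<or> conf P v (a, b)" using mx abF by blast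
    obtain vx vy where vv: "v = (vx, vy)" by (cases v)
    show False
    proof (cases "conf P (a, b) v")
      case True
      then have c1: "a < vx" "vy < b" "rect P a vy vx b" by (simp_all add: vv)
      show False
      proof (cases "vx \<le> c")
        case True
        have "rect P a b vx f" using rect_mono[OF R] True by auto
        then have "rect P a vy vx f" using rect_vjoin c1(3) by blast
        then have "conf P (a, f) (vx, vy)" using c1 bf by auto
        then have "b \<le> vy" using minrow vF vv by blast
        then show False using c1 by auto
      next
        case False
        have "rect P c vy vx b" using rect_mono[OF c1(3)] ac by auto
        then have "conf P (c, b) (vx, vy)" using False c1 by auto
        then show False using nc qF vF vv by blast
      qed
    next
      case False
      then have c2: "vx < a" "b < vy" "rect P vx b a vy" using vc by (auto simp: vv)
      show False
      proof (cases "vy \<le> f")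
        case True
        have "rect P a b c vy" using rect_mono[OF R] True by auto
        then have "rect P vx b c vy" using rect_hjoin c2(3) by blast
        then have "conf P (vx, vy) (c, b)" using c2 ac by auto
        then show False using nc qF vF vv by blast
      next
        case False
        have "rect P vx f a vy" using rect_mono[OF c2(3)] bf by auto
        then have "conf P (vx, vy) (a, f)" using False c2 by auto
        then show False using H vF vv by blast
      qed
    qed
  qed
  define px where "px = Max T"
  have pxT: "px \<in> T" unfolding px_def using finT Tne by auto
  have pxmax: "\<And>t. t \<in> T \<Longrightarrow> t \<le> px" unfolding px_def using finT by auto
  have apx: "a \<le> px" and pxc: "px < c" and pF: "(px, b) \<in> F" using pxT unfolding T_def by auto
  define U where "U = {t. b < t \<and> t \<le> f \<and> (c, t) \<in> F}"
  have finU: "finite U" unfolding U_def by (rule finite_subset[of _ "{..f}"]) auto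
  have Une: "U \<noteq> {}"
  proof
    assume U0: "U = {}"
    define W where "W = {v\<in>F. c < fst v \<and> b < snd v \<and> snd v < f \<and> rect P c (snd v) (fst v) f}"
    have W0: "W = {}"
    proof (rule ccontr)
      assume Wne: "W \<noteq> {}"
      have finW: "finite W" using fin unfolding W_def by auto
      define vy where "vy = Min (snd ` W)"
      have "vy \<in> snd ` W" unfolding vy_def using finW Wne by auto
      then obtain vx where vW: "(vx, vy) \<in> W" by force
      have minW: "\<And>x y. (x, y) \<in> W \<Longrightarrow> vy \<le> y"
        unfolding vy_def using finW by (metis Min_le finite_imageI image_eqI snd_conv)
      have vF: "(vx, vy) \<in> F" and cvx: "c < vx" and bvy: "b < vy" and vyf: "vy < f"
        and Rv: "rect P c vy vx f" using vW unfolding W_def by auto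
      have wF: "(c, vy) \<notin> F" using U0 bvy vyf unfolding U_def by auto
      have "(c, vy) \<in> poly_vertices P" using rect_vertex[OF R ac bf] ac bvy vyf by auto
      then obtain y where yF: "y \<in> F" and yc: "conf P (c, vy) y \<or> conf P y (c, vy)" using mx wF by blast
      obtain yx yy where yy: "y = (yx, yy)" by (cases y)
      show False
      proof (cases "conf P (c, vy) y")
        case True
        then have c1: "c < yx" "yy < vy" "rect P c yy yx vy" by (simp_all add: yy)
        consider "yy < b" | "yy = b" | "b < yy" by linarith
        then show False
        proof cases
          case 1
          have "rect P c yy yx b" using rect_mono[OF c1(3)] 1 bvy by auto
          then have "conf P (c, b) (yx, yy)" using 1 c1 by auto
          then show False using nc qF yF yy by blast
        next
          case 2
          show False
          proof (cases "vx < yx")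
            case True
            have "rect P vx b yx vy" using rect_mono[OF c1(3)] 2 cvx by auto
            then have "conf P (vx, vy) (yx, b)" using True bvy by auto
            then show False using nc vF yF yy 2 by blast
          next
            case False
            have "rect P c vy yx f" using rect_mono[OF Rv] False by auto
            then have "rect P c b yx f" using rect_vjoin c1(3) 2 by blast
            then have "rect P a b yx f" using rect_hjoin R by blast
            then have "conf P (a, f) (yx, b)" using ac c1 bf by auto
            then have "yx \<le> c" using maxcol yF yy 2 by blast
            then show False using c1 by auto
          qed
        next
          case 3
          show False
          proof (cases "vx < yx")
            case True
            have "rect P vx yy yx vy" using rect_mono[OF c1(3)] cvx by auto
            then have "conf P (vx, vy) (yx, yy)" using True c1 by auto
            then show False using nc vF yF yy by blast
          next
            case False
            have "rect P c vy yx f" using rect_mono[OF Rv] False by auto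
            then have "rect P c yy yx f" using rect_vjoin c1(3) by blast
            then have "(yx, yy) \<in> W" using yF yy c1 3 vyf unfolding W_def by auto
            then have "vy \<le> yy" using minW by blast
            then show False using c1 by auto
          qed
        qed
      next
        case False
        then have c2: "yx < c" "vy < yy" "rect P yx vy c yy" using yc by (auto simp: yy)
        show False
        proof (cases "yy \<le> f")
          case True
          have "rect P c vy vx yy" using rect_mono[OF Rv] True by auto
          then have "rect P yx vy vx yy" using rect_hjoin c2(3) by blast
          then have "conf P (yx, yy) (vx, vy)" using c2 cvx by auto
          then show False using nc vF yF yy by blast
        next
          case False
          show False
          proof (cases "yx < a")
            case True
            have "rect P yx f a yy" using rect_mono[OF c2(3)] vyf ac by auto
            then have "conf P (yx, yy) (a, f)" using True False by auto
            then show False using H yF yy by blast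
          next
            case False2: False
            have "rect P yx b c vy" using rect_mono[OF R] False2 vyf by auto
            then have "rect P yx b c yy" using rect_vjoin c2(3) by blast
            then have "conf P (yx, yy) (c, b)" using c2 bvy by auto
            then show False using nc qF yF yy by blast
          qed
        qed
      qed
    qed
    have cfF: "(c, f) \<notin> F" using U0 bf unfolding U_def by auto
    have "(c, f) \<in> poly_vertices P" using rect_vertex[OF R ac bf] ac bf by auto
    then obtain y where yF: "y \<in> F" and yc: "conf P (c, f) y \<or> conf P y (c, f)" using mx cfF by blast
    obtain yx yy where yy: "y = (yx, yy)" by (cases y)
    show False
    proof (cases "conf P (c, f) y")
      case True
      then have c1: "c < yx" "yy < f" "rect P c yy yx f" by (simp_all add: yy)
      consider "yy < b" | "yy = b" | "b < yy" by linarith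
      then show False
      proof cases
        case 1
        have "rect P c yy yx b" using rect_mono[OF c1(3)] 1 bf by auto
        then have "conf P (c, b) (yx, yy)" using 1 c1 by auto
        then show False using nc qF yF yy by blast
      next
        case 2
        have "rect P a b yx f" using rect_hjoin R c1(3) 2 by blast
        then have "conf P (a, f) (yx, b)" using ac c1 bf by auto
        then have "yx \<le> c" using maxcol yF yy 2 by blast
        then show False using c1 by auto
      next
        case 3
        then have "(yx, yy) \<in> W" using yF yy c1 unfolding W_def by auto
        then show False using W0 by auto
      qed
    next
      case False
      then have c2: "yx < c" "f < yy" "rect P yx f c yy" using yc by (auto simp: yy)
      show False
      proof (cases "yx < a")
        case True
        have "rect P yx f a yy" using rect_mono[OF c2(3)] ac by auto
        then have "conf P (yx, yy) (a, f)" using True c2 by auto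
        then show False using H yF yy by blast
      next
        case False
        have "rect P yx b c f" using rect_mono[OF R] False by auto
        then have "rect P yx b c yy" using rect_vjoin c2(3) by blast
        then have "conf P (yx, yy) (c, b)" using c2 bf by auto
        then show False using nc qF yF yy by blast
      qed
    qed
  qed
  define rt where "rt = Min U"
  have rtU: "rt \<in> U" unfolding rt_def using finU Une by auto
  have rtmin: "\<And>t. t \<in> U \<Longrightarrow> rt \<le> t" unfolding rt_def using finU by auto
  have brt: "b < rt" and rtf: "rt \<le> f" and rF: "(c, rt) \<in> F" using rtU unfolding U_def by auto
  have cell: "(c - 1, b) \<in> P" using R ac bf unfolding rect_def by auto
  have inn: "inner_interval P (px, b) (c, rt)"
    unfolding inner_rect using pxc brt rect_mono[OF R apx _ _ rtf] by auto
  have btw1: "\<forall>t. px < t \<and> t < c \<longrightarrow> (t, b) \<notin> F"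
  proof (intro allI impI)
    fix t assume t: "px < t \<and> t < c"
    show "(t, b) \<notin> F"
    proof
      assume "(t, b) \<in> F"
      then have "t \<in> T" using t apx unfolding T_def by auto
      then show False using pxmax t by fastforce
    qed
  qed
  have btw2: "\<forall>t. b < t \<and> t < rt \<longrightarrow> (c, t) \<notin> F"
  proof (intro allI impI)
    fix t assume t: "b < t \<and> t < rt"
    show "(c, t) \<notin> F"
    proof
      assume "(c, t) \<in> F"
      then have "t \<in> U" using t rtf unfolding U_def by auto
      then show False using rtmin t by fastforce
    qed
  qed
  have "gen_step_corner P F (c, b)"
    unfolding gen_step_corner_def
    apply (rule exI[of _ "(px, b)"], rule exI[of _ "(c, rt)"])
    using pF qF rF pxc brt btw1 btw2 inn cell ac
    by (auto intro!: bexI[of _ "(c - 1, b)"])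
  then show ?thesis using qF cS unfolding S_def by auto
qed


definition gridprop :: "pt set \<Rightarrow> bool" where
  "gridprop P \<longleftrightarrow> (\<forall>x0 x1 x2 y0 y1 y2. x0 < x1 \<longrightarrow> x1 < x2 \<longrightarrow> y0 < y1 \<longrightarrow> y1 < y2 \<longrightarrow>
     rect P x0 y1 x1 y2 \<longrightarrow> rect P x1 y0 x2 y1 \<longrightarrow> rect P x0 y0 x1 y1 \<or> rect P x1 y1 x2 y2)"

lemma gsc_in: "gen_step_corner P F q \<Longrightarrow> q \<in> F"
  unfolding gen_step_corner_def by blast

lemma lemA:
  assumes gp: "gridprop P" and FD: "F \<in> Delta P" and gs: "gen_step_corner P F q"
  shows "\<exists>z. z \<notin> F \<and> vlt q z \<and> insert z (F - {q}) \<in> Delta P"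
proof -
  have FV: "F \<subseteq> poly_vertices P" and nc: "\<forall>x\<in>F. \<forall>y\<in>F. \<not> conf P x y" using FD by (auto simp: Delta_iff)
  obtain c b where qq: "q = (c, b)" by (cases q)
  obtain p r where pF: "p \<in> F" and qF: "q \<in> F" and rF: "r \<in> F" and e1: "snd p = snd q" and e2: "fst q = fst r"
    and l1: "fst p < fst q" and l2: "snd q < snd r"
    and btw1: "\<forall>t. fst p < t \<and> t < fst q \<longrightarrow> (t, snd p) \<notin> F"
    and btw2: "\<forall>t. snd q < t \<and> t < snd r \<longrightarrow> (fst q, t) \<notin> F"
    and inn: "inner_interval P p r"
    using gs unfolding gen_step_corner_def by blast
  obtain px where pp: "p = (px, b)" using e1 qq by (cases p) auto
  obtain rt where rr: "r = (c, rt)" using e2 qq by (cases r) auto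
  have pxc: "px < c" and brt: "b < rt" using l1 l2 pp qq rr by auto
  have R: "rect P px b c rt" using inn pp rr by (simp add: inner_rect)
  have pF': "(px, b) \<in> F" and qF': "(c, b) \<in> F" and rF': "(c, rt) \<in> F" using pF qF rF pp qq rr by auto
  have b1: "\<And>t. px < t \<Longrightarrow> t < c \<Longrightarrow> (t, b) \<notin> F" using btw1 pp qq by auto
  have b2: "\<And>t. b < t \<Longrightarrow> t < rt \<Longrightarrow> (c, t) \<notin> F" using btw2 qq rr by auto
  define z where "z = (px, rt)"
  have zV: "z \<in> poly_vertices P" unfolding z_def using rect_vertex[OF R pxc brt] pxc brt by auto
  have "conf P z (c, b)" unfolding z_def using R pxc brt by auto
  then have zF: "z \<notin> F" using nc qF' by blast
  have vq: "vlt q z" unfolding z_def qq vlt_def using brt by auto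
  have A1: "\<not> conf P z y" if yF: "y \<in> F" and yq: "y \<noteq> q" for y
  proof
    assume cz: "conf P z y"
    obtain yx yy where yy: "y = (yx, yy)" by (cases y)
    have c1: "px < yx" "yy < rt" "rect P px yy yx rt" using cz unfolding z_def yy by auto
    consider "yy < b" | "yy = b" | "b < yy" by linarith
    then show False
    proof cases
      case 1
      have "rect P px yy yx b" using rect_mono[OF c1(3)] brt 1 by auto
      then have "conf P (px, b) (yx, yy)" using 1 c1 by auto
      then show False using nc pF' yF yy by blast
    next
      case 2
      note yb = this
      consider "yx < c" | "yx = c" | "c < yx" by linarith
      then show False
      proof cases
        case 1 then show False using b1 c1 yF yy yb by blast
      next
        case 2
        then show False using yq yy qq yb by auto
      next
        case 3
        have "rect P c b yx rt" using rect_mono[OF c1(3)] pxc yb by auto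
        then have "conf P (c, rt) (yx, b)" using 3 brt by auto
        then show False using nc rF' yF yy yb by blast
      qed
    next
      case 3
      note byy = this
      consider "yx < c" | "yx = c" | "c < yx" by linarith
      then show False
      proof cases
        case 1
        have "rect P yx b c yy" using rect_mono[OF R] c1 by auto
        then have "conf P (yx, yy) (c, b)" using 1 byy by auto
        then show False using nc qF' yF yy by blast
      next
        case 2 then show False using b2 c1 yF yy byy by blast
      next
        case 3
        have "rect P c yy yx rt" using rect_mono[OF c1(3)] pxc by auto
        then have "conf P (c, rt) (yx, yy)" using 3 c1 by auto
        then show False using nc rF' yF yy by blast
      qed
    qed
  qed
  have A2: "\<not> conf P y z" if yF: "y \<in> F" for y
  proof
    assume cz: "conf P y z"
    obtain yx yy where yy: "y = (yx, yy)" by (cases y)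
    have c2: "yx < px" "rt < yy" "rect P yx rt px yy" using cz unfolding z_def yy by auto
    have "rect P yx b px rt \<or> rect P px rt c yy"
      using gp c2 pxc brt R unfolding gridprop_def by blast
    then show False
    proof
      assume "rect P yx b px rt"
      then have "rect P yx b px yy" using rect_vjoin c2(3) by blast
      then have "conf P (yx, yy) (px, b)" using c2 brt by auto
      then show False using nc pF' yF yy by blast
    next
      assume "rect P px rt c yy"
      then have "rect P yx rt c yy" using rect_hjoin c2(3) by blast
      then have "conf P (yx, yy) (c, rt)" using c2 pxc by auto
      then show False using nc rF' yF yy by blast
    qed
  qed
  have "insert z (F - {q}) \<in> Delta P"
    unfolding Delta_iff
  proof (intro conjI ballI)
    show "insert z (F - {q}) \<subseteq> poly_vertices P" using FV zV by auto
  next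
    fix x y assume x: "x \<in> insert z (F - {q})" and y: "y \<in> insert z (F - {q})"
    show "\<not> conf P x y"
      using x y A1 A2 nc conf_irrefl by (metis DiffE insertE singletonI)
  qed
  then show ?thesis using zF vq by blast
qed

section \<open>Grid polyominoes\<close>

lemma grid_gp:
  assumes G: "grid_data m n r s a b"
  shows "gridprop (grid_cells m n r s a b)"
  unfolding gridprop_def
proof (intro allI impI)
  let ?P = "grid_cells m n r s a b"
  fix x0 x1 x2 y0 y1 y2
  assume h: "x0 < x1" "x1 < x2" "y0 < y1" "y1 < y2" and A: "rect ?P x0 y1 x1 y2" and B: "rect ?P x1 y0 x2 y1"
  show "rect ?P x0 y0 x1 y1 \<or> rect ?P x1 y1 x2 y2"
  proof (rule ccontr)
    assume "\<not> ?thesis"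
    then obtain u v u' v' where uv: "x0 \<le> u" "u < x1" "y0 \<le> v" "v < y1" "(u, v) \<notin> ?P"
      and uv': "x1 \<le> u'" "u' < x2" "y1 \<le> v'" "v' < y2" "(u', v') \<notin> ?P"
      unfolding rect_def by blast
    have "(u, y1) \<in> ?P" using A uv h unfolding rect_def by auto
    then have u1: "1 \<le> u" "u + 1 \<le> m" unfolding grid_cells_def cell_in_def by auto
    have "(x1, v) \<in> ?P" using B uv h unfolding rect_def by auto
    then have v1: "1 \<le> v" "v + 1 \<le> n" unfolding grid_cells_def cell_in_def by auto
    have "(x0, v') \<in> ?P" using A uv' h unfolding rect_def by auto
    then have v2: "1 \<le> v'" "v' + 1 \<le> n" unfolding grid_cells_def cell_in_def by auto
    have "(u', y0) \<in> ?P" using B uv' h unfolding rect_def by auto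
    then have u2: "1 \<le> u'" "u' + 1 \<le> m" unfolding grid_cells_def cell_in_def by auto
    obtain i j where ij: "i \<in> {1..r}" "j \<in> {1..s}" "cell_in (u, v) (a i j) (b i j)"
      using uv(5) u1 v1 unfolding grid_cells_def cell_in_def by auto
    obtain i' j' where ij': "i' \<in> {1..r}" "j' \<in> {1..s}" "cell_in (u', v') (a i' j') (b i' j')"
      using uv'(5) u2 v2 unfolding grid_cells_def cell_in_def by auto
    have g1: "fst (a i j) = fst (a i j')" "fst (b i j) = fst (b i j')"
      using G ij ij' unfolding grid_data_def by blast+
    have g2: "snd (a i j') = snd (a i' j')" "snd (b i j') = snd (b i' j')"
      using G ij ij' unfolding grid_data_def by blast+
    have "cell_in (u, v') (a i j') (b i j')"
      using ij(3) ij'(3) g1 g2 unfolding cell_in_def by auto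
    then have "(u, v') \<notin> ?P" using ij(1) ij'(2) unfolding grid_cells_def by blast
    moreover have "(u, v') \<in> ?P" using A uv uv' unfolding rect_def by auto
    ultimately show False by contradiction
  qed
qed

lemma grid_finite: "finite (poly_vertices (grid_cells m n r s a b))"
proof -
  have "grid_cells m n r s a b \<subseteq> {..m} \<times> {..n}"
    unfolding grid_cells_def cell_in_def by auto
  then have "finite (grid_cells m n r s a b)" by (rule finite_subset) auto
  then show ?thesis unfolding poly_vertices_def cell_vertices_def by auto
qed


lemma facet_ext:
  assumes finV: "finite (poly_vertices P)" and X: "X \<in> Delta P"
  shows "\<exists>G\<in>facets (Delta P). X \<subseteq> G"
proof -
  define A where "A = {G \<in> Delta P. X \<subseteq> G}"
  have "A \<subseteq> Pow (poly_vertices P)" unfolding A_def Delta_def by auto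
  then have finA: "finite A" using finV by (meson finite_Pow_iff finite_subset)
  have "A \<noteq> {}" using X unfolding A_def by auto
  then obtain G where G: "G \<in> A" "\<forall>H\<in>A. G \<le> H \<longrightarrow> G = H"
    using finite_has_maximal[OF finA] by blast
  have "G \<in> facets (Delta P)"
    unfolding facets_def using G unfolding A_def by auto
  then show ?thesis using G unfolding A_def by auto
qed

lemma main:
  assumes gp: "gridprop P" and finV: "finite (poly_vertices P)"
    and img: "Fs ` {0..N} = facets (Delta P)"
    and dec: "\<forall>i<N. lex_less (Fs (Suc i)) (Fs i)"
  shows "(\<forall>j\<in>{1..N}. gen (Fs ` {0..<j}) \<inter> gen {Fs j}
            = gen {Fs j - {v} | v. gen_step_corner P (Fs j) v})
         \<and> shelling_order (Delta P) Fs N"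
proof -
  have facD: "\<And>i. i \<le> N \<Longrightarrow> Fs i \<in> facets (Delta P)" using img by auto
  have facfin: "\<And>G. G \<in> facets (Delta P) \<Longrightarrow> finite G"
    using finV unfolding facets_def Delta_def by (auto intro: finite_subset)
  have decV: "\<And>i. i < N \<Longrightarrow> lexV (Fs (Suc i)) (Fs i)"
    using dec facD facfin lex_less_lexV by (metis Suc_leI less_imp_le)
  have chain: "\<And>k. k < j \<Longrightarrow> j \<le> N \<Longrightarrow> lexV (Fs j) (Fs k)" for j
  proof (induction j)
    case 0 then show ?case by auto
  next
    case (Suc j)
    show ?case
    proof (cases "k = j")
      case True then show ?thesis using decV Suc.prems by auto
    next
      case False
      then have "lexV (Fs j) (Fs k)" using Suc by auto
      moreover have "lexV (Fs (Suc j)) (Fs j)" using decV Suc.prems by auto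
      ultimately show ?thesis using lexV_trans by blast
    qed
  qed
  have inj: "inj_on Fs {0..N}"
  proof (rule inj_onI)
    fix i j assume ij: "i \<in> {0..N}" "j \<in> {0..N}" "Fs i = Fs j"
    show "i = j"
    proof (rule ccontr)
      assume "i \<noteq> j"
      then consider "i < j" | "j < i" by linarith
      then show False
        using chain ij lexV_irrefl by cases (metis atLeastAtMost_iff)+
    qed
  qed
  have key: "gen (Fs ` {0..<j}) \<inter> gen {Fs j} = gen {Fs j - {v} | v. gen_step_corner P (Fs j) v}"
    if j: "j \<in> {1..N}" for j
  proof -
    define F where "F = Fs j"
    have FF: "F \<in> facets (Delta P)" using facD j unfolding F_def by auto
    have FD: "F \<in> Delta P" using FF unfolding facets_def by auto
    have ncF: "\<forall>x\<in>F. \<forall>y\<in>F. \<not> conf P x y" using FD by (auto simp: Delta_iff)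
    have finF: "finite F" using facfin FF by auto
    have mx: "\<And>v. v \<in> poly_vertices P \<Longrightarrow> v \<notin> F \<Longrightarrow> \<exists>y\<in>F. conf P v y \<or> conf P y v"
      using facet_max[OF FF] by blast
    show ?thesis
      unfolding F_def[symmetric]
    proof (intro equalityI subsetI)
      fix X assume X: "X \<in> gen (Fs ` {0..<j}) \<inter> gen {F}"
      then obtain k where k: "k < j" "X \<subseteq> Fs k" and XF: "X \<subseteq> F" unfolding gen_def by auto
      define G where "G = Fs k"
      have GF: "G \<in> facets (Delta P)" using facD k j unfolding G_def by auto
      have GD: "G \<in> Delta P" using GF unfolding facets_def by auto
      have ncG: "\<forall>x\<in>G. \<forall>y\<in>G. \<not> conf P x y" using GD by (auto simp: Delta_iff)
      have "lexV F G" using chain k j unfolding F_def G_def by auto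
      then obtain x where xGF: "x \<in> G - F" and xd: "\<forall>y\<in>(F - G) \<union> (G - F). y \<noteq> x \<longrightarrow> vlt y x"
        unfolding lexV_def by blast
      obtain xa xf where xx: "x = (xa, xf)" by (cases x)
      have H: "\<forall>u\<in>F. \<not> conf P u (xa, xf)"
      proof (intro ballI notI)
        fix u assume uF: "u \<in> F" and cu: "conf P u (xa, xf)"
        have "vlt x u" using cu xx unfolding conf_def vlt_def by auto
        have "u \<in> G"
        proof (rule ccontr)
          assume "u \<notin> G"
          then have "u \<in> (F - G) \<union> (G - F)" "u \<noteq> x" using uF xGF by auto
          then have "vlt u x" using xd by blast
          then show False using \<open>vlt x u\<close> vlt_asym by blast
        qed
        then show False using ncG cu xGF xx by blast
      qed
      have xV: "x \<in> poly_vertices P" using GD xGF unfolding Delta_def by auto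
      obtain y where yF: "y \<in> F" and yc: "conf P x y \<or> conf P y x" using mx[OF xV] xGF by blast
      have ex: "\<exists>u\<in>F. conf P (xa, xf) u" using yF yc H xx by blast
      obtain q where qF: "q \<in> F" and gq: "gen_step_corner P F q" and cq: "conf P (xa, xf) q"
        using lemB[OF ncF mx finF ex H] by blast
      have "q \<notin> G" using ncG cq xGF xx by blast
      then have "X \<subseteq> F - {q}" using k XF unfolding G_def by auto
      then show "X \<in> gen {F - {v} |v. gen_step_corner P F v}" unfolding gen_def using gq by blast
    next
      fix X assume X: "X \<in> gen {F - {v} |v. gen_step_corner P F v}"
      then obtain v where gv: "gen_step_corner P F v" and Xv: "X \<subseteq> F - {v}" unfolding gen_def by blast
      have vF: "v \<in> F" using gsc_in[OF gv] .
      obtain z where zF: "z \<notin> F" and vz: "vlt v z" and F'D: "insert z (F - {v}) \<in> Delta P"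
        using lemA[OF gp FD gv] by blast
      obtain G where GF: "G \<in> facets (Delta P)" and F'G: "insert z (F - {v}) \<subseteq> G"
        using facet_ext[OF finV F'D] by blast
      obtain k where k: "k \<in> {0..N}" and Gk: "G = Fs k" using GF img by (metis imageE)
      have GD: "G \<in> Delta P" using GF unfolding facets_def by auto
      have vG: "v \<notin> G"
      proof
        assume "v \<in> G"
        then have "F \<subseteq> G" using F'G by auto
        moreover have "F \<noteq> G" using zF F'G by auto
        ultimately show False using FF GD unfolding facets_def by auto
      qed
      have finG: "finite G" using facfin GF by auto
      obtain x where xGF: "x \<in> G - F" and xm: "\<forall>y\<in>G - F. y \<noteq> x \<longrightarrow> vlt y x"
        using vlt_max_ex[of "G - F"] finG zF F'G by blast
      have "lexV F G"
        unfolding lexV_def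
      proof (rule bexI[OF _ xGF], intro ballI impI)
        fix y assume y: "y \<in> (F - G) \<union> (G - F)" "y \<noteq> x"
        show "vlt y x"
        proof (cases "y \<in> F")
          case True
          then have "y = v" using y F'G by auto
          have "z \<in> G - F" using zF F'G by auto
          then have "z = x \<or> vlt z x" using xm by blast
          then show ?thesis using vz \<open>y = v\<close> vlt_trans by blast
        next
          case False then show ?thesis using y xm by blast
        qed
      qed
      have "k < j"
      proof (rule ccontr)
        assume "\<not> k < j"
        then consider "k = j" | "j < k" by linarith
        then show False
        proof cases
          case 1 then show False using Gk F_def zF F'G by auto
        next
          case 2
          then have "lexV G F" using chain k Gk F_def by auto
          then show False using \<open>lexV F G\<close> lexV_asym by blast
        qed
      qed
      have "X \<subseteq> Fs k" using Xv F'G Gk by auto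
      moreover have "X \<subseteq> F" using Xv by auto
      ultimately show "X \<in> gen (Fs ` {0..<j}) \<inter> gen {F}"
        unfolding gen_def using \<open>k < j\<close> by auto
    qed
  qed
  have shell: "shelling_order (Delta P) Fs N"
    unfolding shelling_order_def
  proof (intro conjI inj img ballI)
    fix j assume j: "j \<in> {1..N}"
    define M where "M = {Fs j - {v} | v. gen_step_corner P (Fs j) v}"
    have eq: "gen (Fs ` {0..<j}) \<inter> gen {Fs j} = gen M" using key[OF j] unfolding M_def .
    have "{} \<in> gen (Fs ` {0..<j}) \<inter> gen {Fs j}" using j unfolding gen_def by (auto intro!: exI[of _ 0])
    then have "{} \<in> gen M" using eq by simp
    then have "M \<noteq> {}" unfolding gen_def by auto
    moreover have "\<forall>G\<in>M. max_proper_face (Fs j) G"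
    proof
      fix G assume "G \<in> M"
      then obtain v where v: "G = Fs j - {v}" "gen_step_corner P (Fs j) v" unfolding M_def by blast
      have "v \<in> Fs j" using gsc_in[OF v(2)] .
      then show "max_proper_face (Fs j) G" unfolding max_proper_face_def v(1) by auto
    qed
    ultimately show "\<exists>\<M>. \<M> \<noteq> {} \<and> (\<forall>G\<in>\<M>. max_proper_face (Fs j) G) \<and>
        gen (Fs ` {0..<j}) \<inter> gen {Fs j} = gen \<M>" using eq by blast
  qed
  show ?thesis using key shell by blast
qed

theorem theorem3p6:
  fixes m n r s :: nat and a b :: "nat \<Rightarrow> nat \<Rightarrow> nat \<times> nat"
    and Fs :: "nat \<Rightarrow> (nat \<times> nat) set" and N :: nat
  assumes "grid_data m n r s a b"
    and "Fs ` {0..N} = facets (Delta (grid_cells m n r s a b))"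
    and "\<forall>i<N. lex_less (Fs (Suc i)) (Fs i)"
  shows "(\<forall>j\<in>{1..N}.
            gen (Fs ` {0..<j}) \<inter> gen {Fs j}
          = gen {Fs j - {v} | v. gen_step_corner (grid_cells m n r s a b) (Fs j) v})
         \<and> shelling_order (Delta (grid_cells m n r s a b)) Fs N"
  by (rule main[OF grid_gp[OF assms(1)] grid_finite assms(2) assms(3)])

end
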